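(* Let $r_1=(y_1,y_1'),\ r_2=(y_2,y_2')\in\mathbb{N}_0^n\times\mathbb{N}_0^n$ and $r_1\oplus r_2=(y,y')$. Then (i) $y'-y=(y_1'-y_1)+(y_2'-y_2)$; (ii) for every $x\in\mathbb{N}_0^n$: $x\ge y$ if and only if $x\ge y_1$ and $x+(y_1'-y_1)\ge y_2$; (iii) for every $x\in\mathbb{N}_0^n$: $x\ge y'$ if and only if $x\ge y_2'$ and $x+(y_2-y_2')\ge y_1'$. Conversely, if $\odot$ is any binary operation on $\mathbb{N}_0^n\times\mathbb{N}_0^n$ such that for all $r_1,r_2$, writing $r_1\odot r_2=(y,y')$, properties (i) and (ii) hold, or alternatively properties (i) and (iii) hold, then $\odot=\oplus$.
   Context: For $x,y\in\mathbb{Z}^n$, $x\le y$ means $x^i\le y^i$ for all $i$; $x\vee y$ is the componentwise maximum. For $r_1=(y_1,y_1'),\ r_2=(y_2,y_2')\in\mathbb{N}_0^n\times\mathbb{N}_0^n$ define $r_1\oplus r_2=(y,y')$ with $y=y_1+0\vee(y_2-y_1')$ and $y'=y_2'+0\vee(y_1'-y_2)$. *)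

theory Defs
  imports Main
begin

text \<open>Elements of N_0^n are modelled as functions from a finite index type 'n to nat
  (n = CARD('n), arbitrary). The order on functions is the pointwise order, and
  differences are taken in the integers.\<close>

type_synonym 'n pr = "('n \<Rightarrow> nat) \<times> ('n \<Rightarrow> nat)"

definition oplus :: "'n pr \<Rightarrow> 'n pr \<Rightarrow> 'n pr" where
  "oplus r1 r2 = (case r1 of (y1, y1') \<Rightarrow> case r2 of (y2, y2') \<Rightarrow>
     ((\<lambda>i. y1 i + nat (max 0 (int (y2 i) - int (y1' i)))),
      (\<lambda>i. y2' i + nat (max 0 (int (y1' i) - int (y2 i))))))"

definition prop_i :: "'n pr \<Rightarrow> 'n pr \<Rightarrow> 'n pr \<Rightarrow> bool" where
  "prop_i r1 r2 r = (\<forall>i.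
     int (snd r i) - int (fst r i) =
     (int (snd r1 i) - int (fst r1 i)) + (int (snd r2 i) - int (fst r2 i)))"

definition prop_ii :: "'n pr \<Rightarrow> 'n pr \<Rightarrow> 'n pr \<Rightarrow> bool" where
  "prop_ii r1 r2 r = (\<forall>x :: 'n \<Rightarrow> nat.
     (fst r \<le> x) \<longleftrightarrow>
     (fst r1 \<le> x \<and> (\<forall>i. int (fst r2 i) \<le> int (x i) + (int (snd r1 i) - int (fst r1 i)))))"

definition prop_iii :: "'n pr \<Rightarrow> 'n pr \<Rightarrow> 'n pr \<Rightarrow> bool" where
  "prop_iii r1 r2 r = (\<forall>x :: 'n \<Rightarrow> nat.
     (snd r \<le> x) \<longleftrightarrow>
     (snd r2 \<le> x \<and> (\<forall>i. int (snd r1 i) \<le> int (x i) + (int (fst r2 i) - int (snd r2 i)))))"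

end

theory Submission
  imports Defs
begin

lemma fwd_ii: "prop_ii r1 r2 (oplus r1 r2)"
proof (cases r1; cases r2)
  fix a b c d assume [simp]: "r1 = (a,b)" "r2 = (c,d)"
  show ?thesis unfolding prop_ii_def oplus_def le_fun_def
    apply simp
    apply (intro allI iffI conjI)
      apply (metis le_add1 le_trans)
    subgoal for x i apply (drule spec[of _ i]) by linarith
    subgoal for x i apply (elim conjE) apply (drule spec[of _ i])+ by linarith
    done
qed

lemma fwd_iii: "prop_iii r1 r2 (oplus r1 r2)"
proof (cases r1; cases r2)
  fix a b c d assume [simp]: "r1 = (a,b)" "r2 = (c,d)"
  show ?thesis unfolding prop_iii_def oplus_def le_fun_def
    apply simp
    apply (intro allI iffI conjI)
      apply (metis le_add1 le_trans)
    subgoal for x i apply (drule spec[of _ i]) by linarith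
    subgoal for x i apply (elim conjE) apply (drule spec[of _ i])+ by linarith
    done
qed

lemma fwd_i: "prop_i r1 r2 (oplus r1 r2)"
  by (cases r1; cases r2) (auto simp: prop_i_def oplus_def)

lemma uniq_le: "(\<forall>x. (a::'n\<Rightarrow>nat) \<le> x \<longleftrightarrow> P x) \<Longrightarrow> (\<forall>x. b \<le> x \<longleftrightarrow> P x) \<Longrightarrow> a = b"
  by (meson antisym order_refl)

lemma conv_ii:
  assumes "prop_i r1 r2 r" "prop_ii r1 r2 r" shows "r = oplus r1 r2"
proof -
  have f: "fst r = fst (oplus r1 r2)"
    using assms(2) fwd_ii[of r1 r2] unfolding prop_ii_def by (rule uniq_le)
  have "snd r = snd (oplus r1 r2)"
  proof
    fix i
    from assms(1) fwd_i[of r1 r2] have "int (snd r i) - int (fst r i) = int (snd (oplus r1 r2) i) - int (fst (oplus r1 r2) i)"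
      unfolding prop_i_def by metis
    with f show "snd r i = snd (oplus r1 r2) i" by simp
  qed
  with f show ?thesis by (simp add: prod_eq_iff)
qed

lemma conv_iii:
  assumes "prop_i r1 r2 r" "prop_iii r1 r2 r" shows "r = oplus r1 r2"
proof -
  have f: "snd r = snd (oplus r1 r2)"
    using assms(2) fwd_iii[of r1 r2] unfolding prop_iii_def by (rule uniq_le)
  have "fst r = fst (oplus r1 r2)"
  proof
    fix i
    from assms(1) fwd_i[of r1 r2] have "int (snd r i) - int (fst r i) = int (snd (oplus r1 r2) i) - int (fst (oplus r1 r2) i)"
      unfolding prop_i_def by metis
    with f show "fst r i = fst (oplus r1 r2) i" by simp
  qed
  with f show ?thesis by (simp add: prod_eq_iff)
qed

theorem proposition2p4:
  shows "(\<forall>r1 r2 :: ('n::finite) pr.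
            prop_i r1 r2 (oplus r1 r2) \<and> prop_ii r1 r2 (oplus r1 r2) \<and> prop_iii r1 r2 (oplus r1 r2))
       \<and> (\<forall>odot :: 'n pr \<Rightarrow> 'n pr \<Rightarrow> 'n pr.
            (\<forall>r1 r2. prop_i r1 r2 (odot r1 r2) \<and> prop_ii r1 r2 (odot r1 r2)) \<longrightarrow> odot = oplus)
       \<and> (\<forall>odot :: 'n pr \<Rightarrow> 'n pr \<Rightarrow> 'n pr.
            (\<forall>r1 r2. prop_i r1 r2 (odot r1 r2) \<and> prop_iii r1 r2 (odot r1 r2)) \<longrightarrow> odot = oplus)"
  using fwd_i fwd_ii fwd_iii conv_ii conv_iii by blast

end
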